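(* Let $\mathcal P$ be a bounded distribution and consider Algorithm 1 (described in the context) run with a parameter $C$. If $C\ge 9$ and $T\ge m(\bar b+\bar a)^2$, then $$\Pr\left(\forall t\in[T+1],\ \|\bm p^t\|_2\le 2W\right)\ge 1-\frac mT.$$
   Context: Online linear programming with replenishment: $m$ resources, horizon $T$; tuples $(r_t,\bm a_t,\bm b_t)\in\mathbb{R}\times\mathbb{R}^m\times\mathbb{R}^m_{\ge0}$, $t=1,\dots,T$, are i.i.d. from a distribution $\mathcal P$; in period $t$ each resource $j$ is replenished by $b_{jt}$, the order $(r_t,\bm a_t)$ is revealed, and a decision $x_t\in\{0,1\}$ is made. Bounded distribution: constants $\bar r,\bar a,\bar b>0$ with $|r|<\bar r$, $\|\bm a\|_2<\bar a$, $\|\bm b\|_\infty<\bar b$ a.s., and $\underline b>0$ with $\mathbb{E}[b_j]>\underline b$ for all $j\in[m]$. Algorithm 1 (inputs $\bar r,\bar a,\bar b,\underline b,T$, parameter $C>0$): set $W=2+\left\lceil\max\left(\frac{8\sqrt m\bar r}{\underline b},\frac{24\sqrt m(\bar b+\bar a)\bar b^2}{\underline b^2},\frac{\bar r+2m(\bar b^2+\bar a^2)}{\sqrt m(\bar b+\bar a)}\right)\right\rceil$ and $\kappa=\lceil 4W\sqrt{CT\ln T}/\underline b\rceil$. Initialize $p^1_j=0$, $\ell_{j,1}=0$. For $t=1,\dots,T$: if $t\le\kappa$, set $x_t=0$ and $p^{t+1}_j=0$ for all $j$; otherwise set $x_t=\mathbb{I}(\forall j,\ \ell_{j,t}\ge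 a_{jt})\cdot\mathbb{I}(r_t>\langle\bm p^t,\bm a_t\rangle)$ and $p^{t+1}_j=\left[p^t_j-\frac{1}{\sqrt{CT\ln T}}\left(b_{jt}-a_{jt}\mathbb{I}(r_t>\langle\bm p^t,\bm a_t\rangle)\right)\right]^+$ for all $j$. Then $\ell_{j,t+1}=\ell_{j,t}+b_{jt}-a_{jt}x_t$. Here $\bm p^t=(p^t_1,\dots,p^t_m)$ and $[y]^+=\max(y,0)$. *)

theory Defs
  imports "HOL-Probability.Probability"
begin

definition olp_W :: "nat \<Rightarrow> real \<Rightarrow> real \<Rightarrow> real \<Rightarrow> real \<Rightarrow> real" where
  "olp_W m rbar abar bbar blow =
     2 + real_of_int (ceiling (max (max (8 * sqrt (real m) * rbar / blow)
                                        (24 * sqrt (real m) * (bbar + abar) * bbar^2 / blow^2))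
                                   ((rbar + 2 * real m * (bbar^2 + abar^2)) / (sqrt (real m) * (bbar + abar)))))"

definition olp_kappa :: "real \<Rightarrow> real \<Rightarrow> real \<Rightarrow> nat \<Rightarrow> real" where
  "olp_kappa W blow C T = real_of_int (ceiling (4 * W * sqrt (C * real T * ln (real T)) / blow))"

text \<open>State of Algorithm 1 at the start of period t (t >= 1): (p^t, l_t).
  Index 0 is a dummy.\<close>
fun olp_state :: "real \<Rightarrow> real \<Rightarrow> (nat \<Rightarrow> real \<times> (real^'m) \<times> (real^'m)) \<Rightarrow> nat \<Rightarrow> (real^'m) \<times> (real^'m)" where
  "olp_state eta kappa \<omega> 0 = (0, 0)"
| "olp_state eta kappa \<omega> (Suc t) =
     (if t = 0 then (0, 0) else
      (let (p, l) = olp_state eta kappa \<omega> t;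
           (r, a, b) = \<omega> t;
           ind = (r > a \<bullet> p);
           x = (if real t \<le> kappa then False else (\<forall>j. l $ j \<ge> a $ j) \<and> ind)
       in ((if real t \<le> kappa then 0
            else (\<chi> j. max 0 (p $ j - eta * (b $ j - a $ j * (if ind then 1 else 0))))),
           l + b - (if x then a else 0))))"

definition olp_price :: "real \<Rightarrow> real \<Rightarrow> real \<Rightarrow> real \<Rightarrow> real \<Rightarrow> nat \<Rightarrow> (nat \<Rightarrow> real \<times> (real^'m) \<times> (real^'m)) \<Rightarrow> nat \<Rightarrow> (real^'m)" where
  "olp_price rbar abar bbar blow C T \<omega> t =
     fst (olp_state (1 / sqrt (C * real T * ln (real T)))
                    (olp_kappa (olp_W CARD('m) rbar abar bbar blow) blow C T) \<omega> t)"

end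

theory Submission
  imports Defs
begin

definition upd :: "real \<Rightarrow> (real^'m) \<Rightarrow> real \<times> (real^'m) \<times> (real^'m) \<Rightarrow> (real^'m)" where
 "upd eta p y = (case y of (r,a,b) \<Rightarrow> (\<chi> j. max 0 (p$j - eta*(b$j - a$j*(if r > a \<bullet> p then 1 else 0)))))"

lemma upd_alt: "upd eta p y = (if fst y > fst (snd y) \<bullet> p then (\<chi> j. max 0 (p$j - eta*(snd (snd y)$j - fst (snd y)$j)))
   else (\<chi> j. max 0 (p$j - eta*(snd (snd y)$j))))"
  by (cases y) (auto simp: upd_def)

lemma upd_meas: "(\<lambda>z::(real^'m) \<times> (real \<times> (real^'m) \<times> (real^'m)). upd eta (fst z) (snd z)) \<in> borel_measurable borel"
proof -
  have c1: "(\<lambda>z::(real^'m) \<times> (real \<times> (real^'m) \<times> (real^'m)). (\<chi> j. max 0 (fst z$j - eta*(snd (snd (snd z))$j - fst (snd (snd z))$j)))) \<in> borel_measurable borel"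
    by (intro borel_measurable_continuous_onI continuous_intros)
  have c0: "(\<lambda>z::(real^'m) \<times> (real \<times> (real^'m) \<times> (real^'m)). (\<chi> j. max 0 (fst z$j - eta*(snd (snd (snd z))$j)))) \<in> borel_measurable borel"
    by (intro borel_measurable_continuous_onI continuous_intros)
  have g: "(\<lambda>z::(real^'m) \<times> (real \<times> (real^'m) \<times> (real^'m)). fst (snd z)) \<in> borel_measurable borel"
    by (intro borel_measurable_continuous_onI continuous_intros)
  have h: "(\<lambda>z::(real^'m) \<times> (real \<times> (real^'m) \<times> (real^'m)). fst (snd (snd z)) \<bullet> fst z) \<in> borel_measurable borel"
    by (intro borel_measurable_continuous_onI continuous_intros)
  have p: "{z \<in> space (borel :: ((real^'m) \<times> (real \<times> (real^'m) \<times> (real^'m))) measure). fst (snd (snd z)) \<bullet> fst z < fst (snd z)} \<in> sets borel"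
    by (rule borel_measurable_less[OF h g])
  show ?thesis unfolding upd_alt
    by (rule measurable_If[OF c1 c0 p])
qed

fun pr :: "real \<Rightarrow> real \<Rightarrow> (nat \<Rightarrow> real \<times> (real^'m) \<times> (real^'m)) \<Rightarrow> nat \<Rightarrow> (real^'m)" where
  "pr eta kappa \<omega> 0 = 0"
| "pr eta kappa \<omega> (Suc t) = (if t = 0 \<or> real t \<le> kappa then 0 else upd eta (pr eta kappa \<omega> t) (\<omega> t))"

lemma pr_eq: "fst (olp_state eta kappa \<omega> t) = pr eta kappa \<omega> t"
proof (induction t)
  case 0 then show ?case by simp
next
  case (Suc t)
  obtain p l where pl: "olp_state eta kappa \<omega> t = (p, l)" by fastforce
  obtain r a b where y: "\<omega> t = (r, a, b)" by (cases "\<omega> t") auto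
  show ?case
  proof (cases "t = 0")
    case True then show ?thesis by simp
  next
    case False
    have "fst (olp_state eta kappa \<omega> (Suc t)) = (if real t \<le> kappa then 0
            else (\<chi> j. max 0 (p $ j - eta * (b $ j - a $ j * (if r > a \<bullet> p then 1 else 0)))))"
      apply (simp only: olp_state.simps pl y Let_def prod.case if_not_P[OF False])
      by simp
    then show ?thesis using Suc.IH pl y False by (simp add: upd_def)
  qed
qed

lemma pr_local: "(\<And>s. s < t \<Longrightarrow> \<omega> s = \<omega>' s) \<Longrightarrow> pr eta kappa \<omega> t = pr eta kappa \<omega>' t"
  by (induction t) auto

lemma upd_nonneg: "upd eta p y $ j \<ge> 0"
  by (cases y) (simp add: upd_def)

lemma pr_nonneg: "pr eta kappa \<omega> t $ j \<ge> 0"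
  by (cases t) (auto simp: upd_nonneg)

lemma pr_meas:
  assumes sD: "sets D = sets borel"
  shows "(\<And>s. 1 \<le> s \<Longrightarrow> s < t \<Longrightarrow> s \<in> I) \<Longrightarrow> (\<lambda>\<omega>. pr eta kappa \<omega> t) \<in> borel_measurable (PiM I (\<lambda>_. D))"
proof (induction t)
  case 0 then show ?case by simp
next
  case (Suc t)
  show ?case
  proof (cases "t = 0 \<or> real t \<le> kappa")
    case True then show ?thesis by simp
  next
    case False
    then have t: "t \<in> I" using Suc.prems by auto
    have m1: "(\<lambda>\<omega>. pr eta kappa \<omega> t) \<in> borel_measurable (PiM I (\<lambda>_. D))"
      using Suc by simp
    have m2: "(\<lambda>\<omega>. \<omega> t) \<in> measurable (PiM I (\<lambda>_. D)) borel"
    proof -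
      have e: "measurable (PiM I (\<lambda>_. D)) D = measurable (PiM I (\<lambda>_. D)) borel"
        by (rule measurable_cong_sets[OF refl sD])
      show ?thesis using measurable_component_singleton[OF t, of "\<lambda>_. D"] unfolding e .
    qed
    have m3: "(\<lambda>\<omega>. (pr eta kappa \<omega> t, \<omega> t)) \<in> measurable (PiM I (\<lambda>_. D)) (borel \<Otimes>\<^sub>M borel)"
      by (rule measurable_Pair[OF m1 m2])
    have m4: "(\<lambda>z::(real^'m) \<times> (real \<times> (real^'m) \<times> (real^'m)). upd eta (fst z) (snd z)) \<in> borel_measurable (borel \<Otimes>\<^sub>M borel)"
      using upd_meas by (simp add: borel_prod)
    have "(\<lambda>\<omega>. upd eta (pr eta kappa \<omega> t) (\<omega> t)) \<in> borel_measurable (PiM I (\<lambda>_. D))"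
      using measurable_comp[OF m3 m4] by (simp add: o_def)
    then show ?thesis using False by simp
  qed
qed

lemma fmeas: "h \<in> borel_measurable M \<Longrightarrow> (\<lambda>\<omega>. ennreal (exp (lam * norm (h \<omega> :: real^'m)))) \<in> borel_measurable M"
  by measurable

lemma norm_b_bound:
  fixes b :: "real^'m"
  assumes "\<forall>j. \<bar>b $ j\<bar> < bbar"
  shows "norm b \<le> sqrt (real CARD('m)) * bbar"
proof -
  have bb: "bbar > 0" using assms by (meson abs_ge_zero le_less_trans)
  have "(\<Sum>j\<in>UNIV. (b $ j)\<^sup>2) \<le> (\<Sum>j\<in>(UNIV::'m set). bbar\<^sup>2)"
  proof (intro sum_mono)
    fix j show "(b $ j)\<^sup>2 \<le> bbar\<^sup>2"
      using assms by (metis abs_ge_zero less_imp_le power2_abs power_mono)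
  qed
  also have "\<dots> = real CARD('m) * bbar\<^sup>2" by simp
  finally have s: "(\<Sum>j\<in>UNIV. (b $ j)\<^sup>2) \<le> real CARD('m) * bbar\<^sup>2" .
  have "norm b = sqrt (\<Sum>j\<in>UNIV. (b $ j)\<^sup>2)"
    by (simp add: norm_vec_def L2_set_def)
  also have "\<dots> \<le> sqrt (real CARD('m) * bbar\<^sup>2)" using s by simp
  also have "\<dots> = sqrt (real CARD('m)) * bbar" using bb by (simp add: real_sqrt_mult)
  finally show ?thesis .
qed

definition gvec :: "real^'m \<Rightarrow> real \<Rightarrow> real^'m \<Rightarrow> real^'m \<Rightarrow> real^'m" where
  "gvec p r a b = b - (if r > a \<bullet> p then a else 0)"

lemma upd_le: "norm (upd eta p (r,a,b)) \<le> norm (p - eta *\<^sub>R gvec p r a b)"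
  by (rule norm_le_componentwise_cart) (auto simp: upd_def gvec_def)

lemma gvec_norm:
  fixes p a b :: "real^'m"
  assumes "norm a < abar" "\<forall>j. \<bar>b $ j\<bar> < bbar"
  shows "norm (gvec p r a b) \<le> sqrt (real CARD('m)) * bbar + abar"
proof -
  have "norm (gvec p r a b) \<le> norm b + norm (if r > a \<bullet> p then a else 0)"
    unfolding gvec_def by (rule norm_triangle_ineq4)
  also have "\<dots> \<le> sqrt (real CARD('m)) * bbar + abar"
  proof -
    have "abar > 0" using assms(1) norm_ge_zero[of a] by linarith
    then show ?thesis using norm_b_bound[OF assms(2)] assms(1) by auto
  qed
  finally show ?thesis .
qed

lemma D1:
  fixes p a b :: "real^'m"
  assumes "norm a < abar" "\<forall>j. \<bar>b $ j\<bar> < bbar" "eta \<ge> 0"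
  shows "norm (upd eta p (r,a,b)) \<le> norm p + eta * (sqrt (real CARD('m)) * bbar + abar)"
proof -
  have "norm (upd eta p (r,a,b)) \<le> norm (p - eta *\<^sub>R gvec p r a b)" by (rule upd_le)
  also have "\<dots> \<le> norm p + norm (eta *\<^sub>R gvec p r a b)" by (rule norm_triangle_ineq4)
  also have "\<dots> \<le> norm p + eta * (sqrt (real CARD('m)) * bbar + abar)"
    using gvec_norm[OF assms(1,2)] assms(3) by (simp add: mult_left_mono)
  finally show ?thesis .
qed

lemma D2:
  fixes p a b :: "real^'m"
  assumes "norm a < abar" "\<forall>j. \<bar>b $ j\<bar> < bbar" "eta \<ge> 0" "\<bar>r\<bar> < rbar" "rbar > 0"
  shows "(norm (upd eta p (r,a,b)))\<^sup>2 \<le> (norm p)\<^sup>2 - 2 * eta * (p \<bullet> b - rbar) + eta\<^sup>2 * (sqrt (real CARD('m)) * bbar + abar)\<^sup>2"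
proof -
  define G where "G = sqrt (real CARD('m)) * bbar + abar"
  define g where "g = gvec p r a b"
  have gn: "norm g \<le> G" using gvec_norm[OF assms(1,2)] by (simp add: g_def G_def)
  have pg: "p \<bullet> g \<ge> p \<bullet> b - rbar"
  proof (cases "r > a \<bullet> p")
    case True
    then have "p \<bullet> a < rbar" using assms(4) by (simp add: inner_commute)
    then show ?thesis using True by (simp add: g_def gvec_def inner_diff_right)
  next
    case False then show ?thesis using assms(5) by (simp add: g_def gvec_def)
  qed
  have "norm (upd eta p (r,a,b)) \<le> norm (p - eta *\<^sub>R g)" unfolding g_def by (rule upd_le)
  then have "(norm (upd eta p (r,a,b)))\<^sup>2 \<le> (norm (p - eta *\<^sub>R g))\<^sup>2"
    by (simp add: power_mono)
  also have "(norm (p - eta *\<^sub>R g))\<^sup>2 = (norm p)\<^sup>2 - 2 * eta * (p \<bullet> g) + eta\<^sup>2 * (norm g)\<^sup>2"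
  proof -
    have "(norm (p - eta *\<^sub>R g))\<^sup>2 = (p - eta *\<^sub>R g) \<bullet> (p - eta *\<^sub>R g)" by (rule power2_norm_eq_inner)
    also have "\<dots> = p \<bullet> p - 2 * eta * (p \<bullet> g) + eta\<^sup>2 * (g \<bullet> g)"
      by (simp add: inner_diff_left inner_diff_right inner_commute[of g p] power2_eq_square algebra_simps)
    finally show ?thesis by (simp add: power2_norm_eq_inner)
  qed
  also have "\<dots> \<le> (norm p)\<^sup>2 - 2 * eta * (p \<bullet> b - rbar) + eta\<^sup>2 * G\<^sup>2"
  proof -
    have "2 * eta * (p \<bullet> b - rbar) \<le> 2 * eta * (p \<bullet> g)" using pg assms(3) by (simp add: mult_left_mono)
    moreover have "eta\<^sup>2 * (norm g)\<^sup>2 \<le> eta\<^sup>2 * G\<^sup>2" using gn by (simp add: mult_left_mono power_mono)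
    ultimately show ?thesis by linarith
  qed
  finally show ?thesis by (simp add: G_def)
qed

lemma D3:
  fixes p a b :: "real^'m"
  assumes "norm a < abar" "\<forall>j. \<bar>b $ j\<bar> < bbar" "eta \<ge> 0" "\<bar>r\<bar> < rbar" "rbar > 0"
    and W: "W > 0" "norm p \<ge> W"
    and c: "rbar / W + eta * (sqrt (real CARD('m)) * bbar + abar)\<^sup>2 / (2 * W) \<le> blow / 4"
  shows "norm (upd eta p (r,a,b)) \<le> norm p + eta * (blow / 4 - (p \<bullet> b) / norm p)"
proof -
  define G where "G = sqrt (real CARD('m)) * bbar + abar"
  define x where "x = norm p"
  define n where "n = norm (upd eta p (r,a,b))"
  have x0: "x > 0" using W unfolding x_def by linarith
  have d2: "n\<^sup>2 \<le> x\<^sup>2 - 2 * eta * (p \<bullet> b - rbar) + eta\<^sup>2 * G\<^sup>2"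
    using D2[OF assms(1-5)] by (simp add: n_def x_def G_def)
  have "2 * x * n \<le> n\<^sup>2 + x\<^sup>2" using sum_squares_bound[of x n] by (simp add: power2_eq_square algebra_simps)
  then have "2 * x * n \<le> 2 * x\<^sup>2 - 2 * eta * (p \<bullet> b) + 2 * eta * rbar + eta\<^sup>2 * G\<^sup>2" using d2 by (simp add: algebra_simps)
  then have "n \<le> (2 * x\<^sup>2 - 2 * eta * (p \<bullet> b) + 2 * eta * rbar + eta\<^sup>2 * G\<^sup>2) / (2 * x)"
    using x0 by (simp add: field_simps)
  also have "\<dots> = x - eta * (p \<bullet> b) / x + eta * (rbar / x + eta * G\<^sup>2 / (2 * x))"
    using x0 by (simp add: field_simps power2_eq_square)
  also have "\<dots> \<le> x - eta * (p \<bullet> b) / x + eta * (rbar / W + eta * G\<^sup>2 / (2 * W))"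
  proof -
    have "rbar / x \<le> rbar / W" using W x0 assms(5) by (simp add: x_def frac_le)
    moreover have "eta * G\<^sup>2 / (2 * x) \<le> eta * G\<^sup>2 / (2 * W)"
      using W x0 assms(3) by (intro divide_left_mono) (auto simp: x_def)
    ultimately show ?thesis using assms(3) by (simp add: mult_left_mono)
  qed
  also have "\<dots> \<le> x - eta * (p \<bullet> b) / x + eta * (blow / 4)"
    using mult_left_mono[OF c assms(3)] unfolding G_def by linarith
  finally show ?thesis by (simp add: n_def x_def algebra_simps)
qed


lemma exp_neg_taylor:
  fixes y :: real assumes "y \<ge> 0" shows "exp (- y) \<le> 1 - y + y\<^sup>2 / 2"
proof -
  define h where "h z = 1 - z + z\<^sup>2 / 2 - exp (- z)" for z :: real
  have d: "(h has_real_derivative (-1 + z + exp (- z))) (at z)" for z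
    unfolding h_def by (auto intro!: derivative_eq_intros simp: power2_eq_square)
  have "h 0 \<le> h y"
  proof (rule DERIV_nonneg_imp_nondecreasing[OF assms])
    fix z assume "0 \<le> z" "z \<le> y"
    show "\<exists>d. (h has_real_derivative d) (at z) \<and> 0 \<le> d"
      using d[of z] exp_ge_add_one_self[of "-z"] by (intro exI[of _ "-1 + z + exp (- z)"]) auto
  qed
  then show ?thesis by (simp add: h_def)
qed

lemma meas_D: "sets D = sets borel \<Longrightarrow> f \<in> borel_measurable borel \<Longrightarrow> f \<in> borel_measurable D"
  using measurable_cong_sets[of D borel borel borel] by simp

lemma inner_nonneg_vec:
  fixes p b :: "real^'m"
  assumes "\<forall>j. p $ j \<ge> 0" "\<forall>j. b $ j \<ge> 0"
  shows "p \<bullet> b \<ge> 0"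
  using assms unfolding inner_vec_def by (auto intro!: sum_nonneg)

lemma one_step:
  fixes D :: "(real \<times> (real^'m) \<times> (real^'m)) measure" and p :: "real^'m"
  assumes D: "prob_space D" "sets D = sets borel"
    and pos: "rbar > 0" "bbar > 0" "blow > 0"
    and ae: "AE (r, a, b) in D. \<bar>r\<bar> < rbar \<and> norm a < abar \<and> (\<forall>j. \<bar>b $ j\<bar> < bbar) \<and> (\<forall>j. b $ j \<ge> 0)"
    and Eb: "\<forall>j. (\<integral>(r, a, b). b $ j \<partial>D) > blow"
    and pn: "\<forall>j. p $ j \<ge> 0" and eta: "eta \<ge> 0" and W: "W > 0" and lam: "lam \<ge> 0"
    and c: "rbar / W + eta * (sqrt (real CARD('m)) * bbar + abar)\<^sup>2 / (2 * W) \<le> blow / 4"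
    and s: "lam * eta = blow / (real CARD('m) * bbar\<^sup>2)"
  shows "(\<integral>\<^sup>+y. ennreal (exp (lam * norm (upd eta p y))) \<partial>D)
          \<le> ennreal (exp (lam * norm p)) + ennreal (exp (lam * (W + eta * (sqrt (real CARD('m)) * bbar + abar))))"
proof -
  interpret prob_space D by (rule D(1))
  define G where "G = sqrt (real CARD('m)) * bbar + abar"
  define M where "M = exp (lam * (W + eta * G))"
  show ?thesis
  proof (cases "norm p < W")
    case True
    have "AE y in D. ennreal (exp (lam * norm (upd eta p y))) \<le> ennreal M"
      using ae
    proof eventually_elim
      case (elim y)
      obtain r a b where y: "y = (r, a, b)" by (cases y) auto
      have e: "norm a < abar" "\<forall>j. \<bar>b $ j\<bar> < bbar" using elim by (auto simp: y)
      have "norm (upd eta p y) \<le> norm p + eta * G"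
        using D1[OF e eta, of p r] by (simp add: y G_def)
      then have "lam * norm (upd eta p y) \<le> lam * (W + eta * G)"
        using True lam by (intro mult_left_mono) auto
      then show ?case by (simp add: M_def)
    qed
    then have "(\<integral>\<^sup>+y. ennreal (exp (lam * norm (upd eta p y))) \<partial>D) \<le> (\<integral>\<^sup>+y. ennreal M \<partial>D)"
      by (rule nn_integral_mono_AE)
    also have "\<dots> = ennreal M" by (simp add: emeasure_space_1)
    finally show ?thesis unfolding M_def G_def by (simp add: add_increasing)
  next
    case False
    then have px: "norm p \<ge> W" by simp
    define x where "x = norm p"
    have x0: "x > 0" using px W unfolding x_def by linarith
    define B2 where "B2 = real CARD('m) * bbar\<^sup>2"
    have B2: "B2 > 0" using pos by (simp add: B2_def)
    define sx where "sx = lam * eta"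
    define K where "K = exp (lam * x + sx * blow / 4)"
    define h where "h y = K * (1 - sx * (p \<bullet> snd (snd y)) / x + sx\<^sup>2 * B2 / 2)" for y :: "real \<times> (real^'m) \<times> (real^'m)"
    have sx0: "sx \<ge> 0" using lam eta by (simp add: sx_def)
    have ae1: "AE y in D. exp (lam * norm (upd eta p y)) \<le> h y"
      using ae
    proof eventually_elim
      case (elim y)
      obtain r a b where y: "y = (r, a, b)" by (cases y) auto
      have e: "\<bar>r\<bar> < rbar" "norm a < abar" "\<forall>j. \<bar>b $ j\<bar> < bbar" "\<forall>j. b $ j \<ge> 0"
        using elim by (auto simp: y)
      define X where "X = (p \<bullet> b) / x"
      have X0: "X \<ge> 0" using inner_nonneg_vec[OF pn e(4)] x0 by (simp add: X_def)
      have "p \<bullet> b \<le> x * norm b" unfolding x_def by (rule norm_cauchy_schwarz)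
      also have "\<dots> \<le> x * (sqrt (real CARD('m)) * bbar)"
        using norm_b_bound[OF e(3)] x0 by (simp add: mult_left_mono)
      finally have "X \<le> sqrt (real CARD('m)) * bbar" using x0 by (simp add: X_def field_simps)
      then have "X\<^sup>2 \<le> (sqrt (real CARD('m)) * bbar)\<^sup>2" using X0 by (rule power_mono)
      then have X2: "X\<^sup>2 \<le> B2" by (simp add: B2_def power_mult_distrib)
      have d3: "norm (upd eta p (r,a,b)) \<le> x + eta * (blow / 4 - X)"
        using D3[OF e(2) e(3) eta e(1) pos(1) W px c] by (simp add: x_def X_def)
      have "lam * norm (upd eta p y) \<le> lam * x + sx * blow / 4 + (- (sx * X))"
        using mult_left_mono[OF d3 lam] by (simp add: y sx_def algebra_simps)
      then have "exp (lam * norm (upd eta p y)) \<le> exp (lam * x + sx * blow / 4 + (- (sx * X)))"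
        by simp
      also have "\<dots> = K * exp (- (sx * X))" unfolding K_def by (rule exp_add)
      also have "\<dots> \<le> K * (1 - sx * X + (sx * X)\<^sup>2 / 2)"
        using exp_neg_taylor[of "sx * X"] X0 sx0 by (simp add: K_def)
      also have "\<dots> \<le> K * (1 - sx * X + sx\<^sup>2 * B2 / 2)"
      proof -
        have "(sx * X)\<^sup>2 \<le> sx\<^sup>2 * B2" using X2 by (simp add: power_mult_distrib mult_left_mono)
        then show ?thesis by (simp add: K_def)
      qed
      also have "\<dots> = h y" by (simp add: h_def y X_def)
      finally show ?case .
    qed
    have ib: "integrable D (\<lambda>y. snd (snd y) $ j)" for j
    proof (rule integrable_const_bound[where B=bbar])
      show "AE y in D. norm (snd (snd y) $ j) \<le> bbar"
        using ae by eventually_elim (auto simp: less_imp_le)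
      show "(\<lambda>y. snd (snd y) $ j) \<in> borel_measurable D"
        by (intro meas_D[OF D(2)] borel_measurable_continuous_onI continuous_intros)
    qed
    have Ebj: "(\<integral>y. snd (snd y) $ j \<partial>D) > blow" for j
      using Eb by (simp add: case_prod_unfold)
    have hform: "h = (\<lambda>y. K * (1 + sx\<^sup>2 * B2 / 2) - (K * sx / x) * (\<Sum>j\<in>UNIV. p $ j * snd (snd y) $ j))"
      by (auto simp: h_def inner_vec_def algebra_simps sum_divide_distrib)
    have ih: "integrable D h" unfolding hform
      using ib by (intro Bochner_Integration.integrable_diff integrable_mult_right Bochner_Integration.integrable_sum) auto
    have inth: "(\<integral>y. h y \<partial>D) = K * (1 + sx\<^sup>2 * B2 / 2) - (K * sx / x) * (\<Sum>j\<in>UNIV. p $ j * (\<integral>y. snd (snd y) $ j \<partial>D))"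
      unfolding hform using ib
      by (subst Bochner_Integration.integral_diff) (auto simp: prob_space intro!: integrable_mult_right Bochner_Integration.integrable_sum)
    have l1: "x \<le> (\<Sum>j\<in>UNIV. p $ j)"
      using norm_le_l1_cart[of p] pn by (simp add: x_def)
    have "blow * x \<le> (\<Sum>j\<in>UNIV. p $ j * blow)"
      using mult_left_mono[OF l1, of blow] pos by (simp add: sum_distrib_left mult.commute)
    also have "\<dots> \<le> (\<Sum>j\<in>UNIV. p $ j * (\<integral>y. snd (snd y) $ j \<partial>D))"
      using Ebj pn by (intro sum_mono mult_left_mono) (auto intro: less_imp_le)
    finally have sumb: "blow * x \<le> (\<Sum>j\<in>UNIV. p $ j * (\<integral>y. snd (snd y) $ j \<partial>D))" .
    have K0: "K > 0" by (simp add: K_def)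
    have "(K * sx / x) * (blow * x) \<le> (K * sx / x) * (\<Sum>j\<in>UNIV. p $ j * (\<integral>y. snd (snd y) $ j \<partial>D))"
      using sumb K0 sx0 x0 by (intro mult_left_mono) auto
    then have "(\<integral>y. h y \<partial>D) \<le> K * (1 + sx\<^sup>2 * B2 / 2) - K * sx * blow"
      unfolding inth using x0 by (simp add: field_simps)
    also have "\<dots> = K * (1 - blow\<^sup>2 / (2 * B2))"
      using s B2 by (simp add: sx_def B2_def field_simps power2_eq_square)
    also have "\<dots> \<le> K * exp (- (blow\<^sup>2 / (2 * B2)))"
      using K0 exp_ge_add_one_self[of "- (blow\<^sup>2 / (2 * B2))"] by (intro mult_left_mono) auto
    also have "\<dots> = exp (lam * x) * exp (- (blow\<^sup>2 / (4 * B2)))"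
    proof -
      have e1: "sx * blow / 4 = blow\<^sup>2 / (4 * B2)" using s B2 by (simp add: sx_def B2_def field_simps power2_eq_square)
      have "K * exp (- (blow\<^sup>2 / (2 * B2))) = exp (lam * x + sx * blow / 4 + (- (blow\<^sup>2 / (2 * B2))))"
        unfolding K_def by (rule mult_exp_exp)
      also have "lam * x + sx * blow / 4 + (- (blow\<^sup>2 / (2 * B2))) = lam * x + (- (blow\<^sup>2 / (4 * B2)))"
        unfolding e1 using B2 by (simp add: field_simps)
      finally show ?thesis by (simp only: mult_exp_exp)
    qed
    also have "\<dots> \<le> exp (lam * x)" using B2 by simp
    finally have inth2: "(\<integral>y. h y \<partial>D) \<le> exp (lam * x)" .
    have "(\<integral>\<^sup>+y. ennreal (exp (lam * norm (upd eta p y))) \<partial>D) \<le> (\<integral>\<^sup>+y. ennreal (h y) \<partial>D)"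
      using ae1 by (intro nn_integral_mono_AE) (auto elim!: eventually_mono intro: ennreal_leI)
    also have "\<dots> = ennreal (\<integral>y. h y \<partial>D)"
      using ih ae1 by (intro nn_integral_eq_integral) (auto elim!: eventually_mono intro: order_trans[OF less_imp_le[OF exp_gt_zero]])
    also have "\<dots> \<le> ennreal (exp (lam * x))" using inth2 by (rule ennreal_leI)
    finally show ?thesis unfolding x_def by (simp add: add_increasing2)
  qed
qed


lemma expect_bound:
  fixes D :: "(real \<times> (real^'m) \<times> (real^'m)) measure"
  assumes D: "prob_space D" "sets D = sets borel"
    and step: "\<And>p::real^'m. \<forall>j. p $ j \<ge> 0 \<Longrightarrow> (\<integral>\<^sup>+y. ennreal (exp (lam * norm (upd eta p y))) \<partial>D) \<le> ennreal (exp (lam * norm p)) + ennreal M"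
    and M: "M \<ge> 1"
  shows "n \<le> T \<Longrightarrow> (\<integral>\<^sup>+\<omega>. ennreal (exp (lam * norm (pr eta kappa \<omega> (Suc n)))) \<partial>PiM {1..T} (\<lambda>_. D)) \<le> ennreal (1 + real n * M)"
proof (induction n)
  interpret P: prob_space "PiM {1..T} (\<lambda>_. D)" by (intro prob_space_PiM D(1))
  case 0 then show ?case using P.emeasure_space_1 by (simp del: One_nat_def)
next
  interpret P: prob_space "PiM {1..T} (\<lambda>_. D)" by (intro prob_space_PiM D(1))
  interpret Dp: prob_space D by (rule D(1))
  interpret PS: product_sigma_finite "\<lambda>_. D"
    by unfold_locales
  case (Suc n)
  define i where "i = Suc n"
  define I where "I = {1..T} - {i}"
  have iI: "i \<notin> I" "finite I" and ins: "insert i I = {1..T}"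
    using Suc.prems by (auto simp: I_def i_def)
  define f where "f \<omega> = ennreal (exp (lam * norm (pr eta kappa \<omega> (Suc i))))" for \<omega> :: "nat \<Rightarrow> real \<times> (real^'m) \<times> (real^'m)"
  define g where "g \<omega> = ennreal (exp (lam * norm (pr eta kappa \<omega> i)))" for \<omega> :: "nat \<Rightarrow> real \<times> (real^'m) \<times> (real^'m)"
  have IH: "(\<integral>\<^sup>+\<omega>. g \<omega> \<partial>PiM {1..T} (\<lambda>_. D)) \<le> ennreal (1 + real n * M)"
    using Suc by (simp add: g_def i_def)
  show ?case
  proof (cases "real i \<le> kappa")
    case True
    then have "(\<integral>\<^sup>+\<omega>. f \<omega> \<partial>PiM {1..T} (\<lambda>_. D)) = 1"
      using P.emeasure_space_1 by (simp add: f_def del: One_nat_def)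
    also have "\<dots> \<le> ennreal (1 + real (Suc n) * M)" using M by simp
    finally show ?thesis by (simp add: f_def i_def)
  next
    case False
    have i0: "i \<noteq> 0" by (simp add: i_def)
    have fm: "f \<in> borel_measurable (PiM (insert i I) (\<lambda>_. D))"
    proof -
      have "(\<lambda>\<omega>. pr eta kappa \<omega> (Suc i)) \<in> borel_measurable (PiM (insert i I) (\<lambda>_. D))"
        using Suc.prems by (intro pr_meas D(2)) (auto simp: i_def I_def)
      then show ?thesis unfolding f_def by (rule fmeas)
    qed
    have gm: "g \<in> borel_measurable (PiM (insert i I) (\<lambda>_. D))"
    proof -
      have "(\<lambda>\<omega>. pr eta kappa \<omega> i) \<in> borel_measurable (PiM (insert i I) (\<lambda>_. D))"
        using Suc.prems by (intro pr_meas D(2)) (auto simp: i_def I_def)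
      then show ?thesis unfolding g_def by (rule fmeas)
    qed
    have loc: "pr eta kappa (x(i := y)) i = pr eta kappa x i" for x y
      by (rule pr_local) auto
    have fx: "f (x(i := y)) = ennreal (exp (lam * norm (upd eta (pr eta kappa x i) y)))" for x y
      using False i0 by (simp add: f_def loc)
    have "(\<integral>\<^sup>+\<omega>. f \<omega> \<partial>PiM {1..T} (\<lambda>_. D)) = (\<integral>\<^sup>+x. (\<integral>\<^sup>+y. f (x(i := y)) \<partial>D) \<partial>PiM I (\<lambda>_. D))"
      unfolding ins[symmetric] by (rule PS.product_nn_integral_insert[OF iI(2) iI(1) fm])
    also have "\<dots> \<le> (\<integral>\<^sup>+x. g x + ennreal M \<partial>PiM I (\<lambda>_. D))"
      by (intro nn_integral_mono) (simp add: fx g_def step pr_nonneg)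
    also have "\<dots> = (\<integral>\<^sup>+x. g x \<partial>PiM I (\<lambda>_. D)) + ennreal M"
    proof -
      interpret PI: prob_space "PiM I (\<lambda>_. D)" by (intro prob_space_PiM D(1))
      have "g \<in> borel_measurable (PiM I (\<lambda>_. D))"
        unfolding g_def using Suc.prems by (intro fmeas pr_meas D(2)) (auto simp: i_def I_def)
      then show ?thesis by (simp add: nn_integral_add PI.emeasure_space_1)
    qed
    also have "(\<integral>\<^sup>+x. g x \<partial>PiM I (\<lambda>_. D)) = (\<integral>\<^sup>+\<omega>. g \<omega> \<partial>PiM {1..T} (\<lambda>_. D))"
    proof -
      have gx: "g (x(i := y)) = g x" for x y by (simp add: g_def loc)
      have "(\<integral>\<^sup>+\<omega>. g \<omega> \<partial>PiM {1..T} (\<lambda>_. D)) = (\<integral>\<^sup>+x. (\<integral>\<^sup>+y. g (x(i := y)) \<partial>D) \<partial>PiM I (\<lambda>_. D))"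
        unfolding ins[symmetric] by (rule PS.product_nn_integral_insert[OF iI(2) iI(1) gm])
      also have "\<dots> = (\<integral>\<^sup>+x. g x \<partial>PiM I (\<lambda>_. D))"
        by (simp add: gx Dp.emeasure_space_1)
      finally show ?thesis by simp
    qed
    also have "\<dots> + ennreal M \<le> ennreal (1 + real n * M) + ennreal M"
      using IH by (rule add_right_mono)
    also have "\<dots> = ennreal (1 + real (Suc n) * M)"
      using M by (simp add: ennreal_plus[symmetric] algebra_simps del: ennreal_plus)
    finally show ?thesis by (simp add: f_def i_def)
  qed
qed


lemma markov_exp:
  fixes h :: "'a \<Rightarrow> real^'m"
  assumes P: "prob_space P" and hm: "h \<in> borel_measurable P" and lam: "lam \<ge> 0"
    and E: "(\<integral>\<^sup>+\<omega>. ennreal (exp (lam * norm (h \<omega>))) \<partial>P) \<le> ennreal E"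
  shows "measure P {\<omega> \<in> space P. c < norm (h \<omega>)} \<le> E * exp (- (lam * c))"
proof -
  interpret prob_space P by (rule P)
  define A where "A = {\<omega> \<in> space P. c < norm (h \<omega>)}"
  have Am: "A \<in> sets P" unfolding A_def using hm by measurable
  have fm: "(\<lambda>\<omega>. ennreal (exp (lam * norm (h \<omega>)))) \<in> borel_measurable P"
    using hm by (rule fmeas)
  have E0: "E \<ge> 0"
  proof -
    have "(0::ennreal) < (\<integral>\<^sup>+\<omega>. ennreal (exp (lam * norm (h \<omega>))) \<partial>P)"
    proof -
      have "(\<integral>\<^sup>+\<omega>. ennreal (exp (lam * norm (h \<omega>))) \<partial>P) \<ge> (\<integral>\<^sup>+\<omega>. ennreal (exp (lam * 0)) \<partial>P) \<or> True" by simp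
      have "AE \<omega> in P. ennreal 1 \<le> ennreal (exp (lam * norm (h \<omega>)))"
        using lam by (intro AE_I2 ennreal_leI) simp
      then have "(\<integral>\<^sup>+\<omega>. ennreal 1 \<partial>P) \<le> (\<integral>\<^sup>+\<omega>. ennreal (exp (lam * norm (h \<omega>))) \<partial>P)"
        by (rule nn_integral_mono_AE)
      then show ?thesis by (simp add: emeasure_space_1) (meson less_le_trans zero_less_one)
    qed
    then have "(0::ennreal) < ennreal E" using E by (rule less_le_trans)
    then show ?thesis by (simp add: ennreal_less_zero_iff less_imp_le)
  qed
  have "emeasure P A = (\<integral>\<^sup>+\<omega>. indicator A \<omega> \<partial>P)" using Am by simp
  also have "\<dots> \<le> (\<integral>\<^sup>+\<omega>. ennreal (exp (lam * norm (h \<omega>))) * ennreal (exp (- (lam * c))) \<partial>P)"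
  proof (intro nn_integral_mono)
    fix \<omega> assume "\<omega> \<in> space P"
    show "indicator A \<omega> \<le> ennreal (exp (lam * norm (h \<omega>))) * ennreal (exp (- (lam * c)))"
    proof (cases "\<omega> \<in> A")
      case True
      then have "lam * c \<le> lam * norm (h \<omega>)" using lam by (intro mult_left_mono) (auto simp: A_def)
      then have "1 \<le> exp (lam * norm (h \<omega>)) * exp (- (lam * c))"
        by (simp add: mult_exp_exp)
      then show ?thesis using True by (simp add: ennreal_mult''[symmetric] ennreal_leI)
    qed simp
  qed
  also have "\<dots> = (\<integral>\<^sup>+\<omega>. ennreal (exp (lam * norm (h \<omega>))) \<partial>P) * ennreal (exp (- (lam * c)))"
    using fm by (rule nn_integral_multc)
  also have "\<dots> \<le> ennreal E * ennreal (exp (- (lam * c)))"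
    using E by (rule mult_right_mono) simp
  also have "\<dots> = ennreal (E * exp (- (lam * c)))" using E0 by (simp add: ennreal_mult)
  finally have "emeasure P A \<le> ennreal (E * exp (- (lam * c)))" .
  then show ?thesis unfolding A_def[symmetric] using E0
    by (simp add: emeasure_eq_measure ennreal_le_iff)
qed

lemma final_num:
  fixes T :: nat and lam W e M :: real
  assumes T: "T \<ge> 2" and lam: "lam \<ge> 0" and M: "M = exp (lam * (W + e))"
    and e: "e \<le> W / 2" and e0: "e \<ge> 0" and W0: "W > 0" and big: "lam * W / 2 \<ge> 18 * ln (real T)"
  shows "real (T + 1) * (1 + real T * M) * exp (- (lam * (2 * W))) \<le> 1 / real T"
proof -
  have M1: "M > 0" by (simp add: M)
  have MT: "M * exp (- (lam * (2 * W))) \<le> exp (- (lam * W / 2))"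
  proof -
    have "M * exp (- (lam * (2 * W))) = exp (lam * (W + e) + (- (lam * (2 * W))))"
      by (simp add: M mult_exp_exp)
    also have "\<dots> \<le> exp (- (lam * W / 2))"
      using mult_left_mono[OF e lam] by (simp add: algebra_simps)
    finally show ?thesis .
  qed
  have e2: "exp (- (lam * W / 2)) \<le> 1 / real T ^ 18"
  proof -
    have "exp (- (lam * W / 2)) \<le> exp (- (18 * ln (real T)))" using big by simp
    also have "exp (- (18 * ln (real T))) = 1 / real T ^ 18"
    proof -
      have "exp (18 * ln (real T)) = real T ^ 18"
        using exp_of_nat_mult[of 18 "ln (real T)"] T by simp
      then show ?thesis by (simp add: exp_minus divide_inverse)
    qed
    finally show ?thesis .
  qed
  have "M \<ge> 1" using M lam e0 W0 by simp
  then have a: "1 + real T * M \<le> real (T + 1) * M" by (simp add: algebra_simps)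
  have nat: "(T + 1)^2 * T \<le> T ^ 18"
  proof -
    have "2 * T \<le> T * T" using T by (intro mult_right_mono) auto
    then have "T + 1 \<le> T * T" using T by linarith
    then have "(T + 1)^2 * T \<le> (T * T)^2 * T" by (simp add: power_mono)
    also have "\<dots> = T ^ 5" by (simp add: power2_eq_square power_def numeral_eq_Suc)
    also have "\<dots> \<le> T ^ 18" using T by (intro power_increasing) auto
    finally show ?thesis .
  qed
  then have natr: "(real T + 1)^2 * real T \<le> real T ^ 18"
    by (metis (mono_tags, lifting) of_nat_1 of_nat_add of_nat_le_iff of_nat_mult of_nat_power)
  have Tp: "real T > 0" using T by simp
  have "real (T + 1) * (1 + real T * M) * exp (- (lam * (2 * W))) \<le> real (T + 1) * (real (T + 1) * M) * exp (- (lam * (2 * W)))"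
    using a by (intro mult_right_mono mult_left_mono) auto
  also have "\<dots> = (real T + 1)^2 * (M * exp (- (lam * (2 * W))))" by (simp add: power2_eq_square algebra_simps)
  also have "\<dots> \<le> (real T + 1)^2 * (1 / real T ^ 18)"
    using MT e2 by (intro mult_left_mono) auto
  also have "\<dots> \<le> 1 / real T"
    using natr Tp by (simp add: field_simps)
  finally show ?thesis .
qed


theorem lemma1:
  fixes D :: "(real \<times> (real^'m) \<times> (real^'m)) measure"
    and rbar abar bbar blow C :: real and T :: nat
  assumes "prob_space D" and "sets D = sets borel"
    and "rbar > 0" and "abar > 0" and "bbar > 0" and "blow > 0"
    and "AE (r, a, b) in D. \<bar>r\<bar> < rbar \<and> norm a < abar \<and> (\<forall>j. \<bar>b $ j\<bar> < bbar) \<and> (\<forall>j. b $ j \<ge> 0)"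
    and "\<forall>j. (\<integral>(r, a, b). b $ j \<partial>D) > blow"
    and "C \<ge> 9"
    and "real T \<ge> real CARD('m) * (bbar + abar)^2"
  shows "measure (PiM {1..T} (\<lambda>_. D))
           {\<omega> \<in> space (PiM {1..T} (\<lambda>_. D)).
              \<forall>t\<in>{1..T+1}. norm (olp_price rbar abar bbar blow C T \<omega> t)
                             \<le> 2 * olp_W CARD('m) rbar abar bbar blow}
         \<ge> 1 - real CARD('m) / real T"
proof -
  note D = assms(1,2) and pos = assms(3-6) and ae = assms(7) and Eb = assms(8) and C9 = assms(9)
  define W where "W = olp_W CARD('m) rbar abar bbar blow"
  define kap where "kap = olp_kappa W blow C T"
  define eta where "eta = 1 / sqrt (C * real T * ln (real T))"
  define P where "P = PiM {1..T} (\<lambda>_::nat. D)"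
  interpret P: prob_space P unfolding P_def by (intro prob_space_PiM D(1))
  have price: "olp_price rbar abar bbar blow C T \<omega> t = pr eta kap \<omega> t" for \<omega> :: "nat \<Rightarrow> real \<times> (real^'m) \<times> (real^'m)" and t
    by (simp add: olp_price_def pr_eq W_def kap_def eta_def)
  define good where "good = {\<omega> \<in> space P. \<forall>t\<in>{1..T+1}. norm (pr eta kap \<omega> t) \<le> 2 * W}"
  define m where "m = real CARD('m)"
  have m1: "m \<ge> 1" by (simp add: m_def)
  have sm: "sqrt m \<ge> 1" using m1 by simp
  define G where "G = sqrt m * bbar + abar"
  define A1 where "A1 = 8 * sqrt m * rbar / blow"
  define A2 where "A2 = 24 * sqrt m * (bbar + abar) * bbar^2 / blow^2"
  define A3 where "A3 = (rbar + 2 * m * (bbar^2 + abar^2)) / (sqrt m * (bbar + abar))"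
  have Wd: "W = 2 + real_of_int (ceiling (max (max A1 A2) A3))"
    by (simp add: W_def olp_W_def A1_def A2_def A3_def m_def)
  have cl: "max (max A1 A2) A3 \<le> real_of_int (ceiling (max (max A1 A2) A3))" by (rule le_of_int_ceiling)
  have hW1: "W \<ge> 2 + A1" using cl unfolding Wd by linarith
  have hW3: "W \<ge> 2 + A3" using cl unfolding Wd by linarith
  have A10: "A1 \<ge> 0" using pos sm unfolding A1_def by simp
  have W0: "W > 0" using hW1 A10 by linarith
  have W8: "rbar / W \<le> blow / 8"
  proof -
    have "8 * rbar / blow \<le> A1" using sm pos by (simp add: A1_def divide_right_mono)
    then have "8 * rbar / blow \<le> W" using hW1 by linarith
    then have "8 * rbar \<le> W * blow" using pos by (simp add: divide_le_eq)
    then show ?thesis using W0 pos by (simp add: divide_le_eq field_simps)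
  qed
  have WG: "sqrt m * (bbar + abar) \<le> W"
  proof -
    have sp: "sqrt m * (bbar + abar) > 0" using sm pos by simp
    have "(sqrt m * (bbar + abar)) * (sqrt m * (bbar + abar)) = m * (bbar + abar)^2"
      using m1 by (simp add: power2_eq_square algebra_simps)
    also have "\<dots> \<le> rbar + 2 * m * (bbar^2 + abar^2)"
    proof -
      have "(bbar + abar)^2 \<le> 2 * (bbar^2 + abar^2)" using sum_squares_bound[of bbar abar] by (simp add: power2_eq_square algebra_simps)
      then have "m * (bbar + abar)^2 \<le> m * (2 * (bbar^2 + abar^2))" using m1 by (intro mult_left_mono) auto
      moreover have "m * (2 * (bbar^2 + abar^2)) = 2 * m * (bbar^2 + abar^2)" by simp
      ultimately show ?thesis using pos by linarith
    qed
    finally have "sqrt m * (bbar + abar) \<le> A3" unfolding A3_def using sp by (simp add: pos_le_divide_eq)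
    then show ?thesis using hW3 by linarith
  qed
  have G0: "G \<ge> 0" using pos sm by (simp add: G_def)
  have GW: "G \<le> W"
  proof -
    have "abar \<le> sqrt m * abar" using sm pos by simp
    then show ?thesis using WG by (simp add: G_def algebra_simps)
  qed
  have bW: "sqrt m * bbar \<le> W"
  proof -
    have "sqrt m * bbar \<le> sqrt m * (bbar + abar)" using sm pos by (intro mult_left_mono) auto
    then show ?thesis using WG by linarith
  qed
  have goal_eq: "{\<omega> \<in> space (PiM {1..T} (\<lambda>_. D)). \<forall>t\<in>{1..T+1}. norm (olp_price rbar abar bbar blow C T \<omega> t)
                             \<le> 2 * olp_W CARD('m) rbar abar bbar blow} = good"
    by (simp add: good_def P_def price W_def)
  have "measure P good \<ge> 1 - m / real T"
  proof (cases "real T \<le> kap")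
    case True
    have "pr eta kap \<omega> t = 0" if tt: "t \<in> {1..T+1}" for \<omega> :: "nat \<Rightarrow> real \<times> (real^'m) \<times> (real^'m)" and t
    proof -
      obtain n where n: "t = Suc n" "n \<le> T" using tt by (cases t) auto
      then have "real n \<le> kap" using True by linarith
      then show ?thesis using n by simp
    qed
    note z = this
    have "good = space P"
    proof -
      have "norm (pr eta kap \<omega> t) \<le> 2 * W" if "t \<in> {1..T+1}" for \<omega> :: "nat \<Rightarrow> real \<times> (real^'m) \<times> (real^'m)" and t
        using z[OF that] W0 by simp
      then show ?thesis unfolding good_def by blast
    qed
    then show ?thesis using m1 by (simp add: P.prob_space)
  next
    case False
    show ?thesis
    proof (cases "m / real T \<ge> 1")
      case True then show ?thesis by (smt (verit) measure_nonneg)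
    next
      case False2: False
      have T2: "T \<ge> 2"
      proof -
        have "C * real T * ln (real T) \<ge> 0"
        proof (cases "T = 0")
          case False then show ?thesis using C9 by (intro mult_nonneg_nonneg) auto
        qed simp
        then have "4 * W * sqrt (C * real T * ln (real T)) / blow \<ge> 0" using W0 pos by simp
        then have "kap \<ge> 0" by (simp add: kap_def olp_kappa_def)
        then have "real T > 0" using False by linarith
        then have "m < real T" using False2 by (simp add: field_simps)
        then show ?thesis using m1 by linarith
      qed
      then have Tp: "real T > 0" by simp
      define L where "L = ln (real T)"
      have L: "L \<ge> 1/2"
      proof -
        have "ln (1 / real T) \<le> 1 / real T - 1" using Tp by (intro ln_le_minus_one) simp
        then have "L \<ge> 1 - 1 / real T" using Tp by (simp add: L_def ln_div)
        moreover have "1 / real T \<le> 1/2" using T2 by (simp add: field_simps)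
        ultimately show ?thesis by linarith
      qed
      have CL: "C * L \<ge> 9/2" using mult_mono[OF C9 L] C9 by simp
      define Q where "Q = sqrt (C * real T * L)"
      have Q2: "Q^2 = C * real T * L" unfolding Q_def using C9 L Tp by simp
      have Q3: "Q \<ge> 3"
      proof -
        have T2r: "real T \<ge> 2" using T2 by simp
        have "2 * (9/2) \<le> real T * (C * L)" using mult_mono[OF T2r CL] by simp
        then have "C * real T * L \<ge> 9" by (simp add: algebra_simps)
        then have "sqrt 9 \<le> sqrt (C * real T * L)" by (rule real_sqrt_le_mono)
        moreover have "sqrt 9 = (3::real)" by (simp add: real_sqrt_eq_iff[symmetric] del: real_sqrt_eq_iff)
        ultimately show ?thesis unfolding Q_def by simp
      qed
      have eta_Q: "eta = 1 / Q" by (simp add: eta_def Q_def L_def)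
      have eta0: "eta > 0" using Q3 by (simp add: eta_Q)
      have eta3: "eta \<le> 1/3" using Q3 by (simp add: eta_Q field_simps)
      have kapQ: "4 * W * Q / blow \<le> kap"
        by (simp add: kap_def olp_kappa_def Q_def L_def)
      have QT: "4 * W * Q < real T * blow"
      proof -
        have "4 * W * Q \<le> kap * blow" using kapQ pos by (simp add: divide_le_eq)
        also have "kap * blow < real T * blow" using False pos by simp
        finally show ?thesis .
      qed
      have eta_small: "eta * (4 * W * C * L) \<le> blow"
      proof -
        have "eta * (4 * W * C * L) = 4 * W * Q / real T"
          using Q2 Q3 Tp by (simp add: eta_Q field_simps power2_eq_square)
        also have "\<dots> \<le> blow" using QT Tp by (simp add: divide_le_eq mult.commute)
        finally show ?thesis .
      qed
      have c: "rbar / W + eta * (sqrt (real CARD('m)) * bbar + abar)\<^sup>2 / (2 * W) \<le> blow / 4"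
      proof -
        have "eta * G^2 / (2 * W) \<le> eta * W / 2"
        proof -
          have "G^2 \<le> W^2" using G0 GW by (simp add: power_mono)
          then have "eta * G^2 \<le> eta * W^2" using eta0 by (simp add: mult_left_mono)
          then show ?thesis using W0 by (simp add: divide_le_eq power2_eq_square field_simps)
        qed
        also have "\<dots> \<le> blow / 8"
        proof -
          have "eta * W * 4 * 1 \<le> eta * W * 4 * (C * L)"
            using CL eta0 W0 by (intro mult_left_mono) auto
          then have "eta * W * 4 \<le> eta * (4 * W * C * L)" by (simp add: algebra_simps)
          then show ?thesis using eta_small by linarith
        qed
        finally have "eta * G^2 / (2 * W) \<le> blow / 8" .
        then show ?thesis using W8 unfolding G_def m_def by linarith
      qed
      define lam where "lam = blow / (m * bbar^2 * eta)"
      have lam0: "lam \<ge> 0" using pos eta0 m1 by (simp add: lam_def)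
      have s: "lam * eta = blow / (real CARD('m) * bbar\<^sup>2)" using eta0 by (simp add: lam_def m_def)
      define M where "M = exp (lam * (W + eta * G))"
      have step: "(\<integral>\<^sup>+y. ennreal (exp (lam * norm (upd eta p y))) \<partial>D) \<le> ennreal (exp (lam * norm p)) + ennreal M"
        if "\<forall>j. p $ j \<ge> 0" for p :: "real^'m"
        using one_step[OF D pos(1) pos(3) pos(4) ae Eb that less_imp_le[OF eta0] W0 lam0 c s]
        by (simp add: M_def G_def m_def)
      have M1: "M \<ge> 1" using lam0 W0 eta0 G0 by (simp add: M_def)
      define bad where "bad t = {\<omega> \<in> space P. 2 * W < norm (pr eta kap \<omega> t)}" for t
      have badm: "measure P (bad t) \<le> (1 + real T * M) * exp (- (lam * (2 * W)))" if t: "t \<in> {1..T+1}" for t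
      proof -
        obtain n where n: "t = Suc n" "n \<le> T" using t by (cases t) auto
        have "(\<integral>\<^sup>+\<omega>. ennreal (exp (lam * norm (pr eta kap \<omega> (Suc n)))) \<partial>P) \<le> ennreal (1 + real n * M)"
          unfolding P_def by (rule expect_bound[OF D step M1 n(2)])
        also have "\<dots> \<le> ennreal (1 + real T * M)"
          using n M1 by (intro ennreal_leI add_left_mono mult_right_mono) auto
        finally have E: "(\<integral>\<^sup>+\<omega>. ennreal (exp (lam * norm (pr eta kap \<omega> t))) \<partial>P) \<le> ennreal (1 + real T * M)"
          using n by simp
        have hm: "(\<lambda>\<omega>. pr eta kap \<omega> t) \<in> borel_measurable P"
          unfolding P_def using n by (intro pr_meas D(2)) auto
        show ?thesis unfolding bad_def by (rule markov_exp[OF P.prob_space_axioms hm lam0 E])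
      qed
      have bads: "bad t \<in> sets P" if "t \<in> {1..T+1}" for t
      proof -
        have hm: "(\<lambda>\<omega>. pr eta kap \<omega> t) \<in> borel_measurable P"
          unfolding P_def using that by (intro pr_meas D(2)) auto
        show ?thesis unfolding bad_def using hm by measurable
      qed
      have U: "space P - good = (\<Union>t\<in>{1..T+1}. bad t)"
        by (auto simp: good_def bad_def not_le)
      have "measure P (\<Union>t\<in>{1..T+1}. bad t) \<le> (\<Sum>t\<in>{1..T+1}. measure P (bad t))"
        using bads by (intro P.finite_measure_subadditive_finite) auto
      also have "\<dots> \<le> (\<Sum>t\<in>{1..T+1}. (1 + real T * M) * exp (- (lam * (2 * W))))"
        using badm by (intro sum_mono) auto
      also have "\<dots> = real (T + 1) * (1 + real T * M) * exp (- (lam * (2 * W)))" by simp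
      also have "\<dots> \<le> 1 / real T"
      proof (rule final_num[OF T2 lam0 M_def])
        show "eta * G \<le> W / 2"
        proof -
          have "eta * G \<le> eta * W" using GW eta0 by (simp add: mult_left_mono)
          also have "\<dots> \<le> W / 3" using mult_right_mono[OF eta3, of W] W0 by simp
          finally show ?thesis using W0 by linarith
        qed
        show "eta * G \<ge> 0" using eta0 G0 by simp
        show "W > 0" by (rule W0)
        show "lam * W / 2 \<ge> 18 * ln (real T)"
        proof -
          have b1: "blow / eta \<ge> 4 * W * C * L" using eta_small eta0 by (simp add: field_simps)
          have W2: "W^2 \<ge> m * bbar^2"
          proof -
            have "(sqrt m * bbar)^2 \<le> W^2" using bW pos sm by (intro power_mono) auto
            then show ?thesis using m1 by (simp add: power_mult_distrib)
          qed
          have mb: "m * bbar^2 > 0" using m1 pos by simp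
          have "lam * W / 2 = (blow / eta) * W / (2 * m * bbar^2)" using eta0 by (simp add: lam_def field_simps)
          also have "\<dots> \<ge> (4 * W * C * L) * W / (2 * m * bbar^2)"
            using b1 W0 mb by (intro divide_right_mono mult_right_mono) auto
          finally have "lam * W / 2 \<ge> 2 * C * L * (W^2 / (m * bbar^2))"
            by (simp add: power2_eq_square field_simps)
          moreover have "W^2 / (m * bbar^2) \<ge> 1" using W2 mb by simp
          moreover have "2 * C * L \<ge> 18 * L" using C9 L by simp
          moreover have "2 * C * L * (W^2 / (m * bbar^2)) \<ge> 2 * C * L * 1"
            using calculation(2) CL by (intro mult_left_mono) auto
          moreover have "2 * C * L \<ge> 18 * L" using mult_right_mono[OF C9, of L] L by simp
          ultimately show ?thesis unfolding L_def by linarith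
        qed
      qed
      finally have Ub: "measure P (space P - good) \<le> 1 / real T" unfolding U .
      have goods: "good \<in> sets P"
      proof -
        have "good = space P - (space P - good)" by (auto simp: good_def)
        moreover have "space P - good \<in> sets P" unfolding U using bads by auto
        moreover have "space P - (space P - good) \<in> sets P" using calculation(2) by (rule sets.compl_sets)
        ultimately show ?thesis by simp
      qed
      have "measure P good = 1 - measure P (space P - good)"
        using P.prob_compl[OF goods] by simp
      then have "measure P good \<ge> 1 - 1 / real T" using Ub by linarith
      moreover have "1 / real T \<le> m / real T" using m1 Tp by (simp add: divide_right_mono)
      ultimately show ?thesis by linarith
    qed
  qed
  then show ?thesis unfolding goal_eq by (simp add: P_def m_def)
qed

end
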